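(* Let $1 \le k < n$ be integers, let $U_1,\ldots,U_n$ be independent uniform random variables on $[0,1]$ with order statistics $U_{n:1} < \cdots < U_{n:n}$, and set $U_{n:0} := 0$. Let $Q_{n,k}$ be the distribution of $Y_{n,k} := n (U_{n:j} - U_{n:j-1})_{j=1}^k$ and let $P_k$ be the $k$-fold product of the standard exponential distribution. Then \[ \rho(Q_{n,k},P_k) \le \begin{cases} \exp\Bigl( \frac{1}{2n} + \frac{1}{4n^2} \Bigr) & \text{if } k=1, \\ \bigl(1 - \frac{k}{n}\bigr)^{-1/2} & \text{in general}. \end{cases} \] In particular, \[ d_{\mathrm{TV}}(Q_{n,k},P_k) \le \begin{cases} \frac{1}{2n} + \frac{1}{4n^2} & \text{if } k=1, \\ 1 - \sqrt{1 - \frac{k}{n}} < \frac{k}{2n-k} & \text{in general}. \end{cases} \]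
   Context: For probability measures $Q,P$ on $(\mathcal{X},\mathcal{A})$: $\rho(Q,P) := \sup_{A \in \mathcal{A}} Q(A)/P(A)$ with conventions $0/0 := 0$, $a/0 := \infty$ for $a>0$; $d_{\mathrm{TV}}(Q,P) := \sup_{A \in \mathcal{A}} |Q(A)-P(A)|$. *)

theory Defs
  imports "HOL-Probability.Probability"
begin

definition ratio_sup :: "'a measure \<Rightarrow> 'a measure \<Rightarrow> ennreal" where
  "ratio_sup Q P = (SUP A \<in> sets P.
     (if emeasure P A = 0 then (if emeasure Q A = 0 then 0 else \<infinity>)
      else emeasure Q A / emeasure P A))"

definition dTV :: "'a measure \<Rightarrow> 'a measure \<Rightarrow> real" where
  "dTV Q P = (SUP A \<in> sets P. \<bar>measure Q A - measure P A\<bar>)"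

definition order_stat :: "nat \<Rightarrow> (nat \<Rightarrow> real) \<Rightarrow> nat \<Rightarrow> real" where
  "order_stat n u j = (if j = 0 then 0 else sort (map u [0..<n]) ! (j - 1))"

(* Y_{n,k} = n (U_{n:j} - U_{n:j-1})_{j=1..k}, component j stored at index j-1 *)
definition Y_spacings :: "nat \<Rightarrow> nat \<Rightarrow> (nat \<Rightarrow> real) \<Rightarrow> (nat \<Rightarrow> real)" where
  "Y_spacings n k u = (\<lambda>j\<in>{..<k}. real n * (order_stat n u (Suc j) - order_stat n u j))"

definition Q_dist :: "nat \<Rightarrow> nat \<Rightarrow> (nat \<Rightarrow> real) measure" where
  "Q_dist n k = distr (PiM {..<n} (\<lambda>_. uniform_measure lborel {0..1::real}))
                      (PiM {..<k} (\<lambda>_. borel)) (Y_spacings n k)"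

definition P_exp :: "nat \<Rightarrow> (nat \<Rightarrow> real) measure" where
  "P_exp k = PiM {..<k} (\<lambda>_. density lborel (exponential_density 1))"

end

theory Submission
  imports Defs
begin

lemma sort_map_key: "sort (map (u::'a \<Rightarrow> real) xs) = map u (sort_key u xs)"
proof -
  have "mset (map u (sort_key u xs)) = mset (map u xs)" by simp
  moreover have "sorted (map u (sort_key u xs))" by simp
  ultimately show ?thesis using properties_for_sort by metis
qed

lemma sorted_nth_le_iff:
  fixes ys :: "real list"
  shows "sorted ys \<Longrightarrow> j < length ys \<Longrightarrow> (ys ! j \<le> a) \<longleftrightarrow> j < length (filter (\<lambda>x. x \<le> a) ys)"
proof (induction ys arbitrary: j)
  case Nil then show ?case by simp
next
  case (Cons y ys)
  show ?case
  proof (cases "y \<le> a")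
    case True
    then show ?thesis using Cons by (cases j) auto
  next
    case False
    then have "filter (\<lambda>x. x \<le> a) (y # ys) = []" using Cons.prems(1)
      by (auto simp: filter_empty_conv)
    moreover have "\<not> (y # ys) ! j \<le> a"
    proof -
      have "y \<le> (y # ys) ! j" using Cons.prems
        by (cases j) (auto simp: sorted_simps)
      then show ?thesis using False by linarith
    qed
    ultimately show ?thesis by simp
  qed
qed

lemma length_filter_sort: "length (filter P (sort xs)) = length (filter P (xs::real list))"
proof -
  have "mset (filter P (sort xs)) = mset (filter P xs)" by (simp add: mset_filter)
  then show ?thesis by (metis size_mset)
qed

lemma order_stat_le_iff:
  fixes u :: "nat \<Rightarrow> real"
  assumes "j < n"
  shows "(sort (map u [0..<n]) ! j \<le> a) \<longleftrightarrow> real j < (\<Sum>i<n. if u i \<le> a then 1 else 0)"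
proof -
  have "(sort (map u [0..<n]) ! j \<le> a) \<longleftrightarrow> j < length (filter (\<lambda>x. x \<le> a) (map u [0..<n]))"
    using sorted_nth_le_iff[of "sort (map u [0..<n])" j a] assms length_filter_sort by simp
  also have "length (filter (\<lambda>x. x \<le> a) (map u [0..<n])) = (\<Sum>i<n. if u i \<le> a then 1 else 0::nat)"
    by (simp add: length_filter_conv_card sum.If_cases lessThan_atLeast0) (rule arg_cong[where f=card], auto)
  finally have h1: "(sort (map u [0..<n]) ! j \<le> a) \<longleftrightarrow> j < (\<Sum>i<n. if u i \<le> a then 1 else 0::nat)" .
  have h2: "real (\<Sum>i<n. if u i \<le> a then 1 else 0::nat) = (\<Sum>i<n. if u i \<le> a then 1 else 0::real)"
    by (simp only: of_nat_sum) (rule sum.cong, auto)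
  show ?thesis using h1 h2 by (metis of_nat_less_iff)
qed

lemma nth_beyond: "length xs \<le> m \<Longrightarrow> xs ! m = [] ! (m - length xs)"
proof (induction xs arbitrary: m)
  case (Cons x xs) then show ?case by (cases m) auto
qed simp

lemma order_stat_measurable[measurable]:
  "(\<lambda>u. order_stat n u j) \<in> borel_measurable (PiM {..<n} (\<lambda>_. borel))"
proof (cases "j = 0")
  case True then show ?thesis by (simp add: order_stat_def)
next
  case False
  show ?thesis
  proof (cases "j - 1 < n")
    case True
    have "(\<lambda>u::nat\<Rightarrow>real. sort (map u [0..<n]) ! (j - 1)) \<in> borel_measurable (PiM {..<n} (\<lambda>_. borel))"
    proof (rule borel_measurableI_le)
      fix a :: real
      have "{x \<in> space (PiM {..<n} (\<lambda>_. borel)). sort (map x [0..<n]) ! (j - 1) \<le> a}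
         = {x \<in> space (PiM {..<n} (\<lambda>_. borel)). real (j - 1) < (\<Sum>i<n. if x i \<le> a then 1 else 0)}"
        using order_stat_le_iff[OF True] by blast
      also have "\<dots> \<in> sets (PiM {..<n} (\<lambda>_. borel))" by measurable
      finally show "{x \<in> space (PiM {..<n} (\<lambda>_. borel)). sort (map x [0..<n]) ! (j - 1) \<le> a} \<in> sets (PiM {..<n} (\<lambda>_. borel))" .
    qed
    then show ?thesis using False by (simp add: order_stat_def)
  next
    case False2: False
    have "\<And>u::nat\<Rightarrow>real. sort (map u [0..<n]) ! (j - 1) = [] ! (j - 1 - n)"
      using False2 by (subst nth_beyond) auto
    then show ?thesis using False by (simp add: order_stat_def)
  qed
qed


definition Tm :: "real \<Rightarrow> nat \<Rightarrow> (nat \<Rightarrow> real) \<Rightarrow> (nat \<Rightarrow> real)" where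
  "Tm c k u = (\<lambda>j\<in>{..<k}. c * (u j - (if j = 0 then 0 else u (j - 1))))"

lemma Tm_measurable[measurable]:
  "Tm c k \<in> measurable (PiM {..<k} (\<lambda>_. borel)) (PiM {..<k} (\<lambda>_. borel))"
  unfolding Tm_def
proof (rule measurable_restrict)
  fix j assume j: "j \<in> {..<k}"
  show "(\<lambda>x. c * (x j - (if j = 0 then 0 else x (j - 1)))) \<in> borel_measurable (PiM {..<k} (\<lambda>_. borel))"
  proof (cases j)
    case 0 then show ?thesis using j by simp
  next
    case (Suc m)
    then have [measurable]: "m \<in> {..<k}" using j by simp
    show ?thesis using Suc j by simp
  qed
qed

lemma prod_indicator_PiE:
  assumes "x \<in> extensional I" "finite I"
  shows "indicator (PiE I A) x = (\<Prod>i\<in>I. indicator (A i) (x i) :: ennreal)"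
  using assms by (auto simp: indicator_def PiE_def Pi_def)

lemma PiM_density_lborel:
  fixes f :: "real \<Rightarrow> ennreal" and I :: "'i set"
  assumes f[measurable]: "f \<in> borel_measurable borel" and I: "finite I"
    and P: "prob_space (density lborel f)"
  shows "PiM I (\<lambda>_. density lborel f) = density (PiM I (\<lambda>_. lborel)) (\<lambda>x. \<Prod>i\<in>I. f (x i))"
proof -
  interpret D: product_sigma_finite "\<lambda>_::'i. density lborel f"
    unfolding product_sigma_finite_def
    using P prob_space_imp_sigma_finite by blast
  interpret L: product_sigma_finite "\<lambda>_::'i. lborel"
    unfolding product_sigma_finite_def by (simp add: lborel.sigma_finite_measure_axioms)
  show ?thesis
  proof (rule D.PiM_eqI[OF I, symmetric])
    show "sets (density (PiM I (\<lambda>_. lborel)) (\<lambda>x. \<Prod>i\<in>I. f (x i))) = sets (PiM I (\<lambda>_. density lborel f))"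
      by (subst sets_density) (intro sets_PiM_cong; simp)
  next
    fix A assume A: "\<And>i. i \<in> I \<Longrightarrow> A i \<in> sets (density lborel f)"
    then have A': "\<And>i. i \<in> I \<Longrightarrow> A i \<in> sets borel" by simp
    have "emeasure (density (PiM I (\<lambda>_. lborel)) (\<lambda>x. \<Prod>i\<in>I. f (x i))) (PiE I A)
        = (\<integral>\<^sup>+ x. (\<Prod>i\<in>I. f (x i)) * indicator (PiE I A) x \<partial>PiM I (\<lambda>_. lborel))"
      using A' by (subst emeasure_density) (auto intro!: sets_PiM_I_finite I)
    also have "\<dots> = (\<integral>\<^sup>+ x. (\<Prod>i\<in>I. f (x i) * indicator (A i) (x i)) \<partial>PiM I (\<lambda>_. lborel))"
      by (intro nn_integral_cong) (auto simp: prod_indicator_PiE space_PiM PiE_iff I prod.distrib)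
    also have "\<dots> = (\<Prod>i\<in>I. \<integral>\<^sup>+ y. f y * indicator (A i) y \<partial>lborel)"
      using A' L.product_nn_integral_prod[of I "\<lambda>i y. f y * indicator (A i) y"] by (simp add: I)
    also have "\<dots> = (\<Prod>i\<in>I. emeasure (density lborel f) (A i))"
      using A' by (intro prod.cong refl) (simp add: emeasure_density)
    finally show "emeasure (density (PiM I (\<lambda>_. lborel)) (\<lambda>x. \<Prod>i\<in>I. f (x i))) (PiE I A) = (\<Prod>i\<in>I. emeasure (density lborel f) (A i))" .
  qed
qed

lemma Tm_measurable_lborel[measurable]:
  "Tm c k \<in> measurable (PiM {..<k} (\<lambda>_. lborel)) (PiM {..<k} (\<lambda>_. lborel))"
  using Tm_measurable[of c k]
  by (simp cong: measurable_cong_sets sets_PiM_cong)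

lemma Tm_upd:
  "Tm c (Suc k) (x(k := y)) = (Tm c k x)(k := c * (y - (if k = 0 then 0 else x (k - 1))))"
  unfolding Tm_def by (rule ext) auto

lemma h_meas:
  fixes F :: "(nat \<Rightarrow> real) \<Rightarrow> ennreal" and k :: nat
  assumes F: "F \<in> borel_measurable (PiM (insert k {..<k}) (\<lambda>_. lborel))"
  shows "(\<lambda>w. \<integral>\<^sup>+ z. F (w(k := z)) \<partial>lborel) \<in> borel_measurable (PiM {..<k} (\<lambda>_. lborel))"
proof -
    have m: "F \<circ> (\<lambda>(f, y). f(k := y)) \<in> borel_measurable (PiM {..<k} (\<lambda>_. lborel) \<Otimes>\<^sub>M lborel)"
      using measurable_comp[OF measurable_add_dim[of k "{..<k}" "\<lambda>_. lborel"] F] .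
    have e: "F \<circ> (\<lambda>(f, y). f(k := y)) = (\<lambda>(w, z). F (w(k := z)))" by auto
    have m2: "(\<lambda>(w, z). F (w(k := z))) \<in> borel_measurable (PiM {..<k} (\<lambda>_. lborel) \<Otimes>\<^sub>M lborel)"
      using m e by metis
    show ?thesis
      using lborel.borel_measurable_nn_integral[OF m2] .
qed

lemma CV:
  fixes c :: real assumes c: "c > 0"
  shows "F \<in> borel_measurable (PiM {..<k} (\<lambda>_. lborel)) \<Longrightarrow>
    (\<integral>\<^sup>+ u. F (Tm c k u) \<partial>PiM {..<k} (\<lambda>_. lborel)) = ennreal ((1/c)^k) * (\<integral>\<^sup>+ y. F y \<partial>PiM {..<k} (\<lambda>_. lborel))"
proof (induction k arbitrary: F)
  case 0
  have "\<And>u. u \<in> space (PiM {..<0::nat} (\<lambda>_. lborel)) \<Longrightarrow> F (Tm c 0 u) = F u"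
    by (simp add: space_PiM_empty Tm_def restrict_def)
  then have "(\<integral>\<^sup>+ u. F (Tm c 0 u) \<partial>PiM {..<0} (\<lambda>_. lborel)) = (\<integral>\<^sup>+ u. F u \<partial>PiM {..<0} (\<lambda>_. lborel))"
    by (intro nn_integral_cong) simp
  then show ?case by simp
next
  case (Suc k)
  interpret L: product_sigma_finite "\<lambda>_::nat. lborel"
    unfolding product_sigma_finite_def by (simp add: lborel.sigma_finite_measure_axioms)
  have ins: "{..<Suc k} = insert k {..<k}" by auto
  note F[measurable] = Suc.prems[unfolded ins]
  define h where "h = (\<lambda>w. \<integral>\<^sup>+ z. F (w(k := z)) \<partial>lborel)"
  have h[measurable]: "h \<in> borel_measurable (PiM {..<k} (\<lambda>_. lborel))"
    unfolding h_def by (rule h_meas[OF F])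
  have "(\<integral>\<^sup>+ u. F (Tm c (Suc k) u) \<partial>PiM {..<Suc k} (\<lambda>_. lborel))
      = (\<integral>\<^sup>+ x. (\<integral>\<^sup>+ y. F (Tm c (Suc k) (x(k := y))) \<partial>lborel) \<partial>PiM {..<k} (\<lambda>_. lborel))"
    using measurable_comp[OF Tm_measurable_lborel[of c "Suc k"] Suc.prems]
    unfolding ins by (intro L.product_nn_integral_insert) (auto simp: comp_def)
  also have "\<dots> = (\<integral>\<^sup>+ x. ennreal (1/c) * h (Tm c k x) \<partial>PiM {..<k} (\<lambda>_. lborel))"
  proof (rule nn_integral_cong)
    fix x :: "nat \<Rightarrow> real" assume x: "x \<in> space (PiM {..<k} (\<lambda>_. lborel))"
    define t where "t = - c * (if k = 0 then 0 else x (k - 1))"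
    define g where "g z = F ((Tm c k x)(k := z))" for z
    have Tx: "Tm c k x \<in> space (PiM {..<k} (\<lambda>_. lborel))"
      by (rule measurable_space[OF Tm_measurable_lborel x])
    have g[measurable]: "g \<in> borel_measurable borel"
      unfolding g_def using measurable_comp[OF measurable_component_update[OF Tx, of k] F]
      by (simp add: comp_def)
    have "(\<integral>\<^sup>+ z. g z \<partial>lborel) = ennreal c * (\<integral>\<^sup>+ y. g (t + c * y) \<partial>lborel)"
      using nn_integral_real_affine[OF g, of c t] c by simp
    then have "ennreal (1/c) * (\<integral>\<^sup>+ z. g z \<partial>lborel) = (ennreal (1/c) * ennreal c) * (\<integral>\<^sup>+ y. g (t + c * y) \<partial>lborel)"
      by (simp only: mult.assoc)
    also have "ennreal (1/c) * ennreal c = 1"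
      using c by (simp flip: ennreal_mult)
    finally have gi: "(\<integral>\<^sup>+ y. g (t + c * y) \<partial>lborel) = ennreal (1/c) * h (Tm c k x)"
      unfolding h_def g_def by simp
    have "\<And>y. F (Tm c (Suc k) (x(k := y))) = g (t + c * y)"
    proof -
      fix y
      have "c * (y - (if k = 0 then 0 else x (k - 1))) = t + c * y"
        unfolding t_def by (simp add: right_diff_distrib)
      then show "F (Tm c (Suc k) (x(k := y))) = g (t + c * y)"
        unfolding Tm_upd g_def by simp
    qed
    then show "(\<integral>\<^sup>+ y. F (Tm c (Suc k) (x(k := y))) \<partial>lborel) = ennreal (1/c) * h (Tm c k x)"
      using gi by simp
  qed
  also have "\<dots> = ennreal (1/c) * (\<integral>\<^sup>+ x. h (Tm c k x) \<partial>PiM {..<k} (\<lambda>_. lborel))"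
    by (rule nn_integral_cmult) measurable
  also have "\<dots> = ennreal (1/c) * (ennreal ((1/c)^k) * (\<integral>\<^sup>+ w. h w \<partial>PiM {..<k} (\<lambda>_. lborel)))"
    using Suc.IH[OF h] by simp
  also have "(\<integral>\<^sup>+ w. h w \<partial>PiM {..<k} (\<lambda>_. lborel)) = (\<integral>\<^sup>+ y. F y \<partial>PiM {..<Suc k} (\<lambda>_. lborel))"
    unfolding ins h_def by (rule L.product_nn_integral_insert[symmetric]) auto
  finally show ?case
    using c by (simp add: mult.assoc[symmetric] flip: ennreal_mult)
qed


lemma deriv_alg: "0 \<le> y \<Longrightarrow> y < (1::real) \<Longrightarrow> 1 / (1 + y) + 1 / (1 - y) - 2 - 2 * y\<^sup>2 = 2 * y ^ 4 / (1 - y\<^sup>2)"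
proof -
  assume y: "0 \<le> y" "y < 1"
  have p: "1 + y > 0" "1 - y > 0" using y by auto
  have e1: "1 / (1 + y) + 1 / (1 - y) = 2 / ((1+y)*(1-y))"
    using p by (simp add: field_simps)
  have a: "1 - y\<^sup>2 = (1+y)*(1-y)" by (simp add: power2_eq_square algebra_simps)
  have q: "(1+y)*(1-y) > 0" using p by simp
  have "2 / ((1+y)*(1-y)) - 2 - 2 * y\<^sup>2 = (2 - (2 + 2*y\<^sup>2) * ((1+y)*(1-y))) / ((1+y)*(1-y))"
    using p q by (simp add: diff_divide_distrib)
  also have "2 - (2 + 2*y\<^sup>2) * ((1+y)*(1-y)) = 2 * y^4"
    by (simp add: algebra_simps power2_eq_square power4_eq_xxxx)
  finally show ?thesis using e1 a by simp
qed

lemma atanh_lower: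
  fixes x :: real assumes x: "0 \<le> x" "x < 1"
  shows "2*x + 2*x^3/3 \<le> ln (1+x) - ln (1-x)"
proof -
  define f where "f y = ln (1+y) - ln (1-y) - 2*y - 2*y^3/3" for y :: real
  have "f 0 \<le> f x"
  proof (rule DERIV_nonneg_imp_nondecreasing[OF x(1)])
    fix y assume y: "0 \<le> y" "y \<le> x"
    then have y1: "y < 1" using x by simp
    have d: "(f has_real_derivative (2*y^4/(1-y^2))) (at y)"
      unfolding f_def using y y1 deriv_alg[of y]
      by (intro derivative_eq_intros refl | simp)+
    moreover have "0 \<le> 2*y^4/(1-y^2)"
      using y y1 by (intro divide_nonneg_nonneg) (auto simp: power2_eq_square mult_le_one)
    ultimately show "\<exists>d. (f has_real_derivative d) (at y) \<and> 0 \<le> d" by blast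
  qed
  then show ?thesis by (simp add: f_def)
qed

lemma exp_tangent_bound:
  fixes n k :: nat and s :: real
  assumes "k < n" "0 \<le> s" "s \<le> real n"
  shows "(1 - s / n) ^ (n - k) \<le> (1 - real k / n) ^ (n - k) * exp (real k) * exp (- s)"
proof -
  define y where "y = 1 - real k / n"
  define x where "x = 1 - s / n"
  define z where "z = (real k - s) / (real n - real k)"
  have n: "real n > 0" "real k < real n" using assms by auto
  have y: "y > 0" unfolding y_def using n by (simp add: field_simps)
  have x: "x \<ge> 0" unfolding x_def using assms n by (simp add: field_simps)
  have xy: "x / y = 1 + z" unfolding x_def y_def z_def using n by (simp add: field_simps)
  have "(x / y) ^ (n - k) \<le> exp z ^ (n - k)"
    using xy x y by (intro power_mono) (auto simp: exp_ge_add_one_self, metis divide_nonneg_pos)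
  also have "exp z ^ (n - k) = exp (real (n - k) * z)" by (simp add: exp_of_nat_mult)
  also have "real (n - k) * z = real k - s" unfolding z_def using n assms(1) by (simp add: of_nat_diff field_simps)
  finally have "x ^ (n - k) \<le> y ^ (n - k) * exp (real k - s)"
    using y by (simp add: power_divide field_simps)
  then show ?thesis by (simp add: x_def y_def exp_diff exp_minus field_simps)
qed


lemma key_e2:
  fixes p :: nat assumes p: "p \<ge> 1"
  shows "exp 2 * real p ^ (2*p+1) \<le> real (p+1) ^ (2*p+1)"
proof -
  define x where "x = 1 / (2 * real p + 1)"
  have x: "0 \<le> x" "x < 1" unfolding x_def using p by (auto simp: field_simps)
  have p0: "real p > 0" using p by simp
  have a1: "1 + x = 2 * (real p + 1) / (2 * real p + 1)" unfolding x_def using p0 by (simp add: field_simps)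
  have a2: "1 - x = 2 * real p / (2 * real p + 1)" unfolding x_def using p0 by (simp add: field_simps)
  have q0: "2 * real p + 1 > 0" using p0 by simp
  have "2 * x \<le> ln (1 + x) - ln (1 - x)"
  proof -
    have "0 \<le> 2*x^3/3" using x by simp
    then show ?thesis using atanh_lower[OF x] by linarith
  qed
  also have "ln (1 + x) - ln (1 - x) = ln (real p + 1) - ln (real p)"
  proof -
    have l2: "ln (2 * real p + 2) = ln 2 + ln (real p + 1)"
      using ln_mult[of 2 "real p + 1"] by (simp add: algebra_simps)
    show ?thesis unfolding a1 a2 using p0 q0 by (simp add: ln_div ln_mult l2)
  qed
  finally have "2 \<le> (2 * real p + 1) * (ln (real p + 1) - ln (real p))"
    unfolding x_def using q0 by (simp add: field_simps)
  then have "exp 2 \<le> exp ((2 * real p + 1) * ln (real p + 1)) / exp ((2 * real p + 1) * ln (real p))"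
    by (simp add: exp_diff[symmetric] right_diff_distrib)
  also have "exp ((2 * real p + 1) * ln (real p + 1)) = real (p+1) ^ (2*p+1)"
    using p0 exp_of_nat_mult[of "2*p+1" "ln (real p + 1)"] by (simp add: add.commute)
  also have "exp ((2 * real p + 1) * ln (real p)) = real p ^ (2*p+1)"
    using p0 exp_of_nat_mult[of "2*p+1" "ln (real p)"] by (simp add: add.commute)
  finally show ?thesis using p0 by (simp add: field_simps)
qed

lemma prod_step:
  assumes "k < n"
  shows "(\<Prod>i\<in>{n - Suc k + 1..n}. real i) = real (n - k) * (\<Prod>i\<in>{n - k + 1..n}. real i)"
proof -
  have "{n - Suc k + 1..n} = insert (n - k) {n - k + 1..n}" using assms by auto
  then show ?thesis by simp
qed

lemma induct_bound:
  fixes n k :: nat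
  shows "k < n \<Longrightarrow> (\<Prod>i\<in>{n - k + 1..n}. real i)^2 * real (n - k) ^ (2*(n-k)+1) * exp (2 * real k) \<le> real n ^ (2*n+1)"
proof (induction k)
  case 0 then show ?case by simp
next
  case (Suc k)
  define m where "m = n - k"
  define P where "P = (\<Prod>i\<in>{n - k + 1..n}. real i)"
  have m: "m \<ge> 2" using Suc.prems unfolding m_def by simp
  have nk: "n - Suc k = m - 1" unfolding m_def by simp
  have P0: "P \<ge> 0" unfolding P_def by (simp add: prod_nonneg)
  have key: "exp 2 * real (m-1) ^ (2*(m-1)+1) \<le> real m ^ (2*(m-1)+1)"
    using key_e2[of "m-1"] m by simp
  have ex: "2 + (2*(m-1)+1) = 2*m+1" using m by simp
  have e1: "(\<Prod>i\<in>{n - Suc k + 1..n}. real i) = real m * P"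
    using prod_step[OF Suc_lessD[OF Suc.prems]] unfolding P_def m_def .
  have e3: "exp (2 * real (Suc k)) = exp 2 * exp (2 * real k)"
    by (simp add: exp_add[symmetric] algebra_simps)
  have "(\<Prod>i\<in>{n - Suc k + 1..n}. real i)^2 * real (n - Suc k) ^ (2*(n - Suc k)+1) * exp (2 * real (Suc k))
      = (real m * P)^2 * real (m-1) ^ (2*(m-1)+1) * (exp 2 * exp (2 * real k))"
    by (subst e1) (simp only: nk e3)
  also have "\<dots> = P^2 * real m ^ 2 * (exp 2 * real (m-1) ^ (2*(m-1)+1)) * exp (2 * real k)"
    by (simp only: power_mult_distrib mult_ac)
  also have "\<dots> \<le> P^2 * real m ^ 2 * real m ^ (2*(m-1)+1) * exp (2 * real k)"
    using key P0 by (intro mult_right_mono mult_left_mono) auto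
  also have "P^2 * real m ^ 2 * real m ^ (2*(m-1)+1) * exp (2 * real k) = P^2 * real m ^ (2*m+1) * exp (2 * real k)"
    by (simp only: mult.assoc power_add[symmetric] ex)
  also have "P^2 * real m ^ (2*m+1) * exp (2 * real k) \<le> real n ^ (2*n+1)"
    using Suc.IH Suc.prems unfolding P_def m_def by simp
  finally show ?case .
qed


definition Cst :: "nat \<Rightarrow> nat \<Rightarrow> real" where
  "Cst n k = (\<Prod>i\<in>{n - k + 1..n}. real i) / real n ^ k * ((1 - real k / real n) ^ (n - k) * exp (real k))"

lemma Cst_nonneg: "k < n \<Longrightarrow> 0 \<le> Cst n k"
  unfolding Cst_def by (intro mult_nonneg_nonneg divide_nonneg_nonneg prod_nonneg zero_le_power) auto

lemma Cst_general:
  assumes kn: "k < n"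
  shows "Cst n k \<le> (1 - real k / real n) powr (-1/2)"
proof -
  define m where "m = n - k"
  define P where "P = (\<Prod>i\<in>{n - k + 1..n}. real i)"
  define t where "t = 1 - real k / real n"
  have n0: "real n > 0" using kn by simp
  have t_eq: "t = real m / real n" unfolding t_def m_def using kn n0 by (simp add: of_nat_diff field_simps)
  have t0: "t > 0" unfolding t_eq m_def using kn n0 by simp
  have C: "Cst n k = P / real n ^ k * (t ^ m * exp (real k))" unfolding Cst_def P_def t_def m_def ..
  have "(Cst n k)^2 * t = P^2 * t ^ (2*m+1) * exp (real k) ^ 2 / real n ^ (2*k)"
    unfolding C by (simp add: power_mult_distrib power_divide power_mult[symmetric] field_simps)
  also have "\<dots> = P^2 * real m ^ (2*m+1) * exp (2 * real k) / (real n ^ (2*m+1) * real n ^ (2*k))"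
    unfolding t_eq by (simp add: power_divide exp_of_nat_mult[symmetric] field_simps)
  also have "real n ^ (2*m+1) * real n ^ (2*k) = real n ^ (2*n+1)"
  proof -
    have e: "2*m+1 + 2*k = 2*n+1" using kn unfolding m_def by simp
    show ?thesis by (simp only: power_add[symmetric] e)
  qed
  also have "P^2 * real m ^ (2*m+1) * exp (2 * real k) / real n ^ (2*n+1) \<le> 1"
    using induct_bound[OF kn] n0 unfolding P_def m_def by simp
  finally have sq: "(Cst n k * sqrt t)^2 \<le> 1^2" using t0 by (simp add: power_mult_distrib)
  have "Cst n k * sqrt t \<le> 1"
    by (rule power2_le_imp_le[OF sq]) simp
  then have "Cst n k \<le> 1 / sqrt t" using t0 by (simp add: field_simps)
  also have "1 / sqrt t = t powr (-1/2)"
    using t0 by (simp add: powr_minus_divide powr_half_sqrt[symmetric])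
  finally show ?thesis unfolding t_def .
qed

lemma poly_q:
  fixes q :: real assumes q: "q \<ge> 3"
  shows "1/q - 1/(3*q^2) + 1/(3*q^3) \<le> 1/(q+1) + 1/(q+1)^2"
proof -
  define D where "D = 3*q^3*(q+1)^2"
  have q0: "q > 0" "q + 1 > 0" using q by auto
  have D0: "D > 0" unfolding D_def using q0 by simp
  have L: "(1/q - 1/(3*q^2) + 1/(3*q^3)) * D = 3*q^4 + 5*q^3 + 2*q^2 + q + 1"
    unfolding D_def using q0 by (simp add: field_simps power2_eq_square power3_eq_cube power4_eq_xxxx)
  have r1: "1/(q+1) * D = 3*q^3*(q+1)" unfolding D_def using q0 by (simp add: power2_eq_square)
  have r2: "1/(q+1)^2 * D = 3*q^3" unfolding D_def using q0 by simp
  have R: "(1/(q+1) + 1/(q+1)^2) * D = 3*q^4 + 6*q^3"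
    unfolding distrib_right r1 r2 by (simp add: algebra_simps power2_eq_square power3_eq_cube power4_eq_xxxx)
  obtain d where d: "q = 3 + d" "d \<ge> 0" using q by (metis add.commute diff_add_cancel diff_ge_0_iff_ge)
  have "3*q^4 + 5*q^3 + 2*q^2 + q + 1 \<le> 3*q^4 + 6*q^3 \<longleftrightarrow> 0 \<le> 5 + 14*d + 7*d^2 + d^3"
    unfolding d(1) by (simp add: algebra_simps power2_eq_square power3_eq_cube power4_eq_xxxx)
  moreover have "0 \<le> 5 + 14*d + 7*d^2 + d^3" using d(2) by simp
  ultimately have "(1/q - 1/(3*q^2) + 1/(3*q^3)) * D \<le> (1/(q+1) + 1/(q+1)^2) * D"
    unfolding L R by simp
  then show ?thesis using D0 by simp
qed

lemma Cst_one:
  assumes n: "n \<ge> 2"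
  shows "Cst n 1 \<le> exp (1 / (2 * real n) + 1 / (4 * real n ^ 2))"
proof -
  define q where "q = 2 * real n - 1"
  define x where "x = 1 / q"
  have q: "q \<ge> 3" unfolding q_def using n by simp
  have x: "0 \<le> x" "x < 1" unfolding x_def using q by auto
  have n0: "real n > 0" using n by simp
  have C: "Cst n 1 = (1 - 1 / real n) ^ (n - 1) * exp 1"
    unfolding Cst_def using n0 by simp
  have a: "1 - 1 / real n = (1 - x) / (1 + x)"
    unfolding x_def q_def using n0 q by (simp add: field_simps)
  have pos: "1 - 1 / real n > 0" using n by (simp add: field_simps)
  have "ln (1 - 1 / real n) = ln (1 - x) - ln (1 + x)"
    unfolding a using x by (simp add: ln_div)
  also have "\<dots> \<le> - (2*x + 2*x^3/3)" using atanh_lower[OF x] by linarith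
  finally have l: "ln (1 - 1 / real n) \<le> - (2*x + 2*x^3/3)" .
  have "(1 - 1 / real n) ^ (n - 1) = exp (real (n - 1) * ln (1 - 1 / real n))"
    using pos by (simp add: exp_of_nat_mult)
  also have "\<dots> \<le> exp (- real (n - 1) * (2*x + 2*x^3/3))"
  proof -
    have "real (n - 1) * ln (1 - 1 / real n) \<le> - real (n - 1) * (2*x + 2*x^3/3)"
      using mult_left_mono[OF l, of "real (n - 1)"] by (simp add: algebra_simps)
    then show ?thesis by simp
  qed
  finally have "Cst n 1 \<le> exp (- real (n - 1) * (2*x + 2*x^3/3)) * exp 1"
    unfolding C by (simp add: mult_right_mono)
  also have "\<dots> = exp (1 - real (n - 1) * (2*x + 2*x^3/3))"
    by (simp add: exp_add[symmetric])
  also have "1 - real (n - 1) * (2*x + 2*x^3/3) = 1/q - 1/(3*q^2) + 1/(3*q^3)"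
  proof -
    have nq: "real (n - 1) = (q - 1) / 2" unfolding q_def using n by (simp add: of_nat_diff)
    have "q \<noteq> 0" using q by simp
    then show ?thesis unfolding x_def nq by (simp add: field_simps power2_eq_square power3_eq_cube)
  qed
  also have "\<dots> \<le> 1/(q+1) + 1/(q+1)^2" by (rule poly_q[OF q])
  also have "1/(q+1) + 1/(q+1)^2 = 1 / (2 * real n) + 1 / (4 * real n ^ 2)"
    unfolding q_def by (simp add: power2_eq_square)
  finally show ?thesis by simp
qed

lemma final_ineq:
  fixes n k :: nat assumes "1 \<le> k" "k < n"
  shows "1 - sqrt (1 - real k / real n) < real k / (2 * real n - real k)"
proof -
  define t where "t = real k / real n"
  have t: "0 < t" "t < 1" unfolding t_def using assms by auto
  define s where "s = sqrt (1 - t)"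
  have s: "0 < s" "s < 1" unfolding s_def using t by auto
  have ss: "s^2 = 1 - t" unfolding s_def using t by simp
  have "s^2 < s" using s by (simp add: power2_eq_square)
  then have "2 - t < 1 + s" using ss by simp
  have "1 - s = t / (1 + s)" using s ss by (simp add: field_simps power2_eq_square) 
  also have "\<dots> < t / (2 - t)"
    using t \<open>2 - t < 1 + s\<close> by (intro divide_strict_left_mono) auto
  also have "t / (2 - t) = real k / (2 * real n - real k)"
    unfolding t_def using assms by (simp add: field_simps)
  finally show ?thesis unfolding s_def t_def .
qed


abbreviation UU :: "real measure" where "UU \<equiv> uniform_measure lborel {0..1::real}"

lemma Un_density: "UU = density lborel (indicator {0..1})"
  by (simp add: uniform_measure_def divide_ennreal_def)

lemma Un_prob: "prob_space UU"
  by (rule prob_space_uniform_measure) simp_all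

lemma sets_PiM_Un: "sets (PiM I (\<lambda>_. UU)) = sets (PiM I (\<lambda>_. borel))"
  by (intro sets_PiM_cong) simp_all

lemma Tm_cong: "(\<And>i. i < k \<Longrightarrow> w i = w' i) \<Longrightarrow> Tm c k w = Tm c k w'"
  unfolding Tm_def by (intro restrict_ext) auto

lemma Tm_measurable_gen:
  assumes "{..<k} \<subseteq> I"
  shows "Tm c k \<in> measurable (PiM I (\<lambda>_. borel)) (PiM {..<k} (\<lambda>_. borel))"
  unfolding Tm_def
proof (rule measurable_restrict)
  fix j assume j: "j \<in> {..<k}"
  then have [measurable]: "j \<in> I" using assms by auto
  show "(\<lambda>x. c * (x j - (if j = 0 then 0 else x (j - 1)))) \<in> borel_measurable (PiM I (\<lambda>_. borel))"
  proof (cases j)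
    case 0
    then have [measurable]: "0 \<in> I" using j assms by auto
    show ?thesis using 0 by simp
  next
    case (Suc m)
    then have [measurable]: "m \<in> I" "Suc m \<in> I" using j assms by auto
    show ?thesis using Suc by simp
  qed
qed

lemma Y_eq: "Y_spacings n k u = Tm (real n) k (\<lambda>i. order_stat n u (Suc i))"
  unfolding Y_spacings_def Tm_def
  by (intro restrict_ext) (auto simp: order_stat_def)

lemma Y_meas: "Y_spacings n k \<in> measurable (PiM {..<n} (\<lambda>_. UU)) (PiM {..<k} (\<lambda>_. borel))"
proof -
  have "Y_spacings n k \<in> measurable (PiM {..<n} (\<lambda>_. borel)) (PiM {..<k} (\<lambda>_. borel))"
    unfolding Y_spacings_def
    by (rule measurable_restrict) measurable
  then show ?thesis by (simp cong: measurable_cong_sets add: sets_PiM_Un)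
qed

definition Tup :: "nat \<Rightarrow> nat \<Rightarrow> nat list set" where
  "Tup n k = {xs. length xs = k \<and> distinct xs \<and> set xs \<subseteq> {..<n}}"

definition pl :: "nat \<Rightarrow> nat list \<Rightarrow> nat list" where
  "pl n t = t @ filter (\<lambda>j. j \<notin> set t) [0..<n]"

definition reidx :: "nat \<Rightarrow> nat list \<Rightarrow> (nat \<Rightarrow> real) \<Rightarrow> (nat \<Rightarrow> real)" where
  "reidx n t u = (\<lambda>i\<in>{..<n}. u (pl n t ! i))"

definition Pcond :: "nat \<Rightarrow> nat \<Rightarrow> (nat \<Rightarrow> real) \<Rightarrow> bool" where
  "Pcond n k v \<longleftrightarrow> (\<forall>i\<in>{..<k-1}. v i \<le> v (Suc i)) \<and> (\<forall>j\<in>{k..<n}. v (k-1) \<le> v j)"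

definition term0 :: "nat \<Rightarrow> nat \<Rightarrow> (nat \<Rightarrow> real) set \<Rightarrow> (nat \<Rightarrow> real) \<Rightarrow> ennreal" where
  "term0 n k A v = (if Tm (real n) k v \<in> A \<and> Pcond n k v then 1 else 0)"

lemma pl_props:
  assumes t: "t \<in> Tup n k"
  shows "distinct (pl n t)" "set (pl n t) = {..<n}" "length (pl n t) = n"
proof -
  show d: "distinct (pl n t)" using t by (auto simp: pl_def Tup_def)
  show s: "set (pl n t) = {..<n}" using t by (auto simp: pl_def Tup_def)
  show "length (pl n t) = n" using distinct_card[OF d] s by simp
qed

lemma pl_nth_less: "t \<in> Tup n k \<Longrightarrow> i < k \<Longrightarrow> pl n t ! i = t ! i"
  by (auto simp: pl_def Tup_def nth_append)

lemma pl_nth_ge: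
  assumes t: "t \<in> Tup n k" and j: "k \<le> j" "j < n"
  shows "pl n t ! j \<notin> set t"
proof -
  define F where "F = filter (\<lambda>j. j \<notin> set t) [0..<n]"
  have lt: "length t = k" using t by (simp add: Tup_def)
  have lF: "length F = n - k" using pl_props(3)[OF t] lt unfolding pl_def F_def by simp
  have e: "pl n t ! j = F ! (j - k)" using j lt unfolding pl_def F_def by (simp add: nth_append)
  have "F ! (j - k) \<in> set F" using j lF by (intro nth_mem) simp
  then show ?thesis unfolding e F_def by simp
qed

lemma Pcond_meas:
  assumes kn: "k \<le> n"
  shows "Measurable.pred (PiM {..<n} (\<lambda>_. borel)) (Pcond n k)"
proof -
  have 1: "Measurable.pred (PiM {..<n} (\<lambda>_. borel)) (\<lambda>v::nat\<Rightarrow>real. v i \<le> v (Suc i))" if "i \<in> {..<k-1}" for i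
  proof -
    have "i \<in> {..<n}" "Suc i \<in> {..<n}" using that kn by auto
    then show ?thesis unfolding pred_def
      by (intro borel_measurable_le measurable_component_singleton[where M="\<lambda>_. borel", simplified])
  qed
  have 2: "Measurable.pred (PiM {..<n} (\<lambda>_. borel)) (\<lambda>v::nat\<Rightarrow>real. v (k-1) \<le> v j)" if "j \<in> {k..<n}" for j
  proof -
    have "j \<in> {..<n}" "k - 1 \<in> {..<n}" using that by auto
    then show ?thesis unfolding pred_def
      by (intro borel_measurable_le measurable_component_singleton[where M="\<lambda>_. borel", simplified])
  qed
  show ?thesis unfolding Pcond_def
    by (intro pred_intros_logic pred_intros_finite 1 2) auto
qed

lemma term0_meas:
  assumes kn: "k \<le> n" and A: "A \<in> sets (PiM {..<k} (\<lambda>_. borel))"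
  shows "term0 n k A \<in> borel_measurable (PiM {..<n} (\<lambda>_. UU))"
proof -
  have T[measurable]: "Tm (real n) k \<in> measurable (PiM {..<n} (\<lambda>_. borel)) (PiM {..<k} (\<lambda>_. borel))"
    using kn by (intro Tm_measurable_gen) auto
  note P[measurable] = Pcond_meas[OF kn]
  note A[measurable]
  have "term0 n k A \<in> borel_measurable (PiM {..<n} (\<lambda>_. borel))"
    unfolding term0_def by measurable
  then show ?thesis by (simp cong: measurable_cong_sets add: sets_PiM_Un)
qed

lemma reidx_meas:
  assumes t: "t \<in> Tup n k"
  shows "reidx n t \<in> measurable (PiM {..<n} (\<lambda>_. UU)) (PiM {..<n} (\<lambda>_. UU))"
  unfolding reidx_def
proof (rule measurable_restrict)
  fix i assume "i \<in> {..<n}"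
  then have "pl n t ! i \<in> {..<n}" using pl_props[OF t] by (metis nth_mem lessThan_iff)
  then show "(\<lambda>x. x (pl n t ! i)) \<in> measurable (PiM {..<n} (\<lambda>_. UU)) UU"
    by (rule measurable_component_singleton)
qed

lemma symmetry:
  assumes t: "t \<in> Tup n k" and g: "g \<in> borel_measurable (PiM {..<n} (\<lambda>_. UU))"
  shows "(\<integral>\<^sup>+ u. g (reidx n t u) \<partial>PiM {..<n} (\<lambda>_. UU)) = (\<integral>\<^sup>+ u. g u \<partial>PiM {..<n} (\<lambda>_. UU))"
proof -
  have inj: "inj_on (\<lambda>i. pl n t ! i) {..<n}"
    by (rule inj_on_nth) (use pl_props[OF t] in auto)
  have fok: "(\<lambda>i. pl n t ! i) \<in> {..<n} \<rightarrow> {..<n}"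
  proof
    fix i assume "i \<in> {..<n}"
    then show "pl n t ! i \<in> {..<n}" using pl_props[OF t] by (metis nth_mem lessThan_iff)
  qed
  have D: "distr (PiM {..<n} (\<lambda>_. UU)) (PiM {..<n} (\<lambda>i. UU)) (\<lambda>\<omega>. \<lambda>i\<in>{..<n}. \<omega> (pl n t ! i)) = PiM {..<n} (\<lambda>i. UU)"
    by (rule distr_PiM_reindex[where K="{..<n}" and M="\<lambda>_. UU" and f="\<lambda>i. pl n t ! i" and I="{..<n}", OF Un_prob inj fok])
  have "(\<integral>\<^sup>+ u. g u \<partial>PiM {..<n} (\<lambda>_. UU)) = (\<integral>\<^sup>+ u. g u \<partial>distr (PiM {..<n} (\<lambda>_. UU)) (PiM {..<n} (\<lambda>i. UU)) (reidx n t))"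
    using D unfolding reidx_def by simp
  also have "\<dots> = (\<integral>\<^sup>+ u. g (reidx n t u) \<partial>PiM {..<n} (\<lambda>_. UU))"
    using g reidx_meas[OF t] by (intro nn_integral_distr) (auto simp: D reidx_def)
  finally show ?thesis ..
qed

lemma finite_Tup: "finite (Tup n k)"
proof -
  have "Tup n k \<subseteq> {xs. set xs \<subseteq> {..<n} \<and> length xs = k}" by (auto simp: Tup_def)
  moreover have "finite {xs. set xs \<subseteq> {..<n} \<and> length xs = k}" by (rule finite_lists_length_eq) simp
  ultimately show ?thesis by (rule finite_subset)
qed

lemma pointwise:
  assumes kn: "k \<le> n" and k1: "1 \<le> k"
  shows "indicator A (Y_spacings n k u) \<le> (\<Sum>t\<in>Tup n k. term0 n k A (reidx n t u))"
proof -
  define \<sigma> where "\<sigma> = sort_key u [0..<n]"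
  define t where "t = take k \<sigma>"
  have ls: "length \<sigma> = n" unfolding \<sigma>_def by simp
  have ds: "distinct \<sigma>" unfolding \<sigma>_def by simp
  have ss: "set \<sigma> = {..<n}" unfolding \<sigma>_def by auto
  have so: "sorted (map u \<sigma>)" unfolding \<sigma>_def by simp
  have tT: "t \<in> Tup n k" unfolding t_def Tup_def using ls ds ss kn
    by (auto dest: in_set_takeD)
  have os: "order_stat n u (Suc i) = u (\<sigma> ! i)" if "i < n" for i
    using that ls unfolding order_stat_def \<sigma>_def by (simp add: sort_map_key)
  have rv: "reidx n t u i = u (pl n t ! i)" if "i < n" for i
    using that unfolding reidx_def by simp
  have rvk: "reidx n t u i = u (\<sigma> ! i)" if "i < k" for i
    using that kn rv[of i] pl_nth_less[OF tT that] unfolding t_def by simp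
  have mono: "u (\<sigma> ! i) \<le> u (\<sigma> ! j)" if "i \<le> j" "j < n" for i j
    using so that ls unfolding sorted_iff_nth_mono by auto
  have Yeq: "Y_spacings n k u = Tm (real n) k (reidx n t u)"
    unfolding Y_eq using kn by (intro Tm_cong) (simp add: os rvk)
  have Pc: "Pcond n k (reidx n t u)"
    unfolding Pcond_def
  proof (intro conjI ballI)
    fix i assume i: "i \<in> {..<k-1}"
    then show "reidx n t u i \<le> reidx n t u (Suc i)"
      using kn by (simp add: rvk mono)
  next
    fix j assume j: "j \<in> {k..<n}"
    define a where "a = pl n t ! j"
    have an: "a \<in> set \<sigma>" unfolding a_def ss using j pl_props[OF tT] by (metis atLeastLessThan_iff nth_mem)
    have at: "a \<notin> set t" unfolding a_def using pl_nth_ge[OF tT] j by auto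
    obtain p where p: "p < n" "\<sigma> ! p = a" using an ls by (metis in_set_conv_nth)
    have pk: "k \<le> p"
    proof (rule ccontr)
      assume "\<not> k \<le> p"
      then have "\<sigma> ! p \<in> set t" unfolding t_def using p ls by (auto simp: in_set_conv_nth)
      then show False using p at by simp
    qed
    have "reidx n t u (k - 1) = u (\<sigma> ! (k - 1))" using k1 by (simp add: rvk)
    also have "\<dots> \<le> u (\<sigma> ! p)" using pk p k1 by (intro mono) auto
    also have "\<dots> = reidx n t u j" using j p by (simp add: rv a_def)
    finally show "reidx n t u (k - 1) \<le> reidx n t u j" .
  qed
  have "indicator A (Y_spacings n k u) = term0 n k A (reidx n t u)"
    unfolding term0_def Yeq using Pc by (simp add: indicator_def)
  also have "\<dots> \<le> (\<Sum>t\<in>Tup n k. term0 n k A (reidx n t u))"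
    by (rule member_le_sum[OF tT _ finite_Tup]) simp
  finally show ?thesis .
qed

definition Wf :: "real \<Rightarrow> ennreal" where
  "Wf c = ennreal (max 0 (min 1 (1 - c)))"

lemma Wf_meas[measurable]: "Wf \<in> borel_measurable borel"
  unfolding Wf_def by measurable

lemma UU_Ici: "emeasure UU {c..} = Wf c"
proof -
  have "emeasure UU {c..} = emeasure lborel ({0..1} \<inter> {c..})"
    by (simp add: divide_ennreal_def)
  also have "{0..1} \<inter> {c..} = {max 0 c..1::real}" by auto
  also have "emeasure lborel {max 0 c..1::real} = Wf c"
    unfolding emeasure_lborel_Icc_eq Wf_def by (auto simp: max_def min_def)
  finally show ?thesis .
qed

definition Scond :: "nat \<Rightarrow> (nat \<Rightarrow> real) \<Rightarrow> bool" where
  "Scond k x \<longleftrightarrow> (\<forall>i\<in>{..<k-1}. x i \<le> x (Suc i))"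

definition term1 :: "nat \<Rightarrow> nat \<Rightarrow> (nat \<Rightarrow> real) set \<Rightarrow> (nat \<Rightarrow> real) \<Rightarrow> ennreal" where
  "term1 n k A x = (if Tm (real n) k x \<in> A \<and> Scond k x then 1 else 0)"

lemma prod_indicator_all:
  "finite J \<Longrightarrow> (\<Prod>j\<in>J. indicator (B j) (y j) :: ennreal) = (if \<forall>j\<in>J. y j \<in> B j then 1 else 0)"
  by (induct J rule: finite_induct) auto

lemma term0_merge:
  assumes k1: "1 \<le> k"
  shows "term0 n k A (merge {..<k} {k..<n} (x, y)) = term1 n k A x * (\<Prod>j\<in>{k..<n}. indicator {x (k-1)..} (y j))"
proof -
  let ?m = "merge {..<k} {k..<n} (x, y)"
  have m1: "?m i = x i" if "i < k" for i using that by (simp add: merge_def)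
  have m2: "?m j = y j" if "k \<le> j" "j < n" for j using that by (simp add: merge_def)
  have T: "Tm (real n) k ?m = Tm (real n) k x" by (intro Tm_cong) (simp add: m1)
  have P: "Pcond n k ?m \<longleftrightarrow> Scond k x \<and> (\<forall>j\<in>{k..<n}. y j \<in> {x (k-1)..})"
    unfolding Pcond_def Scond_def using k1 by (auto simp: m1 m2)
  show ?thesis
    unfolding term0_def term1_def T P prod_indicator_all[OF finite_atLeastLessThan] by auto
qed

lemma inner_int:
  assumes k1: "1 \<le> k"
  shows "(\<integral>\<^sup>+ y. term0 n k A (merge {..<k} {k..<n} (x, y)) \<partial>PiM {k..<n} (\<lambda>_. UU))
       = term1 n k A x * Wf (x (k-1)) ^ (n - k)"
proof -
  interpret U: product_sigma_finite "\<lambda>_::nat. UU"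
    unfolding product_sigma_finite_def using Un_prob prob_space_imp_sigma_finite by blast
  have "(\<integral>\<^sup>+ y. term0 n k A (merge {..<k} {k..<n} (x, y)) \<partial>PiM {k..<n} (\<lambda>_. UU))
      = (\<integral>\<^sup>+ y. term1 n k A x * (\<Prod>j\<in>{k..<n}. indicator {x (k-1)..} (y j)) \<partial>PiM {k..<n} (\<lambda>_. UU))"
    by (simp add: term0_merge[OF k1])
  also have "\<dots> = term1 n k A x * (\<integral>\<^sup>+ y. (\<Prod>j\<in>{k..<n}. indicator {x (k-1)..} (y j)) \<partial>PiM {k..<n} (\<lambda>_. UU))"
    by (rule nn_integral_cmult) measurable
  also have "(\<integral>\<^sup>+ y. (\<Prod>j\<in>{k..<n}. indicator {x (k-1)..} (y j)) \<partial>PiM {k..<n} (\<lambda>_. UU))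
      = (\<Prod>j\<in>{k..<n}. \<integral>\<^sup>+ z. indicator {x (k-1)..} z \<partial>UU)"
    using U.product_nn_integral_prod[of "{k..<n}" "\<lambda>j z. indicator {x (k-1)..} z"] by simp
  also have "\<dots> = Wf (x (k-1)) ^ (n - k)"
    by (simp add: UU_Ici)
  finally show ?thesis .
qed

lemma Scond_meas:
  "Measurable.pred (PiM {..<k} (\<lambda>_. borel)) (Scond k)"
proof -
  have 1: "Measurable.pred (PiM {..<k} (\<lambda>_. borel)) (\<lambda>v::nat\<Rightarrow>real. v i \<le> v (Suc i))" if "i \<in> {..<k-1}" for i
  proof -
    have "i \<in> {..<k}" "Suc i \<in> {..<k}" using that by auto
    then show ?thesis unfolding pred_def
      by (intro borel_measurable_le measurable_component_singleton[where M="\<lambda>_. borel", simplified])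
  qed
  show ?thesis unfolding Scond_def
    by (intro pred_intros_finite 1) auto
qed

lemma term1_meas:
  assumes A: "A \<in> sets (PiM {..<k} (\<lambda>_. borel))"
  shows "term1 n k A \<in> borel_measurable (PiM {..<k} (\<lambda>_. borel))"
proof -
  note T[measurable] = Tm_measurable[of "real n" k]
  note P[measurable] = Scond_meas[of k]
  note A[measurable]
  show ?thesis unfolding term1_def by measurable
qed

lemma telescope:
  "(\<Sum>j<Suc k. (x j - (if j = 0 then 0 else x (j - 1)))) = (x k :: real)"
  by (induction k) auto

lemma sum_Tm:
  assumes k1: "1 \<le> k"
  shows "(\<Sum>j<k. Tm c k x j) = c * x (k - 1)"
proof -
  obtain k' where k': "k = Suc k'" using k1 by (cases k) auto
  have "(\<Sum>j<k. Tm c k x j) = (\<Sum>j<k. c * (x j - (if j = 0 then 0 else x (j - 1))))"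
    unfolding Tm_def by (intro sum.cong) auto
  also have "\<dots> = c * x (k - 1)"
    unfolding sum_distrib_left[symmetric] k' telescope by simp
  finally show ?thesis .
qed

definition Gf :: "nat \<Rightarrow> nat \<Rightarrow> (nat \<Rightarrow> real) set \<Rightarrow> (nat \<Rightarrow> real) \<Rightarrow> ennreal" where
  "Gf n k A y = ennreal ((1 - real k / real n) ^ (n - k) * exp (real k)) *
     (indicator A y * (\<Prod>j<k. ennreal (exponential_density 1 (y j))))"

lemma pointwise2:
  assumes k1: "1 \<le> k" and kn: "k < n"
  shows "(\<Prod>i<k. indicator {0..1} (x i)) * (term1 n k A x * Wf (x (k-1)) ^ (n - k)) \<le> Gf n k A (Tm (real n) k x)"
proof (cases "(\<forall>i<k. x i \<in> {0..1}) \<and> Scond k x \<and> Tm (real n) k x \<in> A")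
  case False
  then have "(\<Prod>i<k. indicator {0..1} (x i) :: ennreal) = 0 \<or> term1 n k A x = 0"
    unfolding term1_def using prod_indicator_all[of "{..<k}" "\<lambda>_. {0..1}" x] by auto
  then show ?thesis
  proof (elim disjE)
    assume h: "(\<Prod>i<k. indicator {0..1} (x i) :: ennreal) = 0"
    show ?thesis by (simp only: h mult_zero_left zero_le)
  next
    assume h: "term1 n k A x = 0"
    show ?thesis by (simp only: h mult_zero_left mult_zero_right zero_le)
  qed
next
  case True
  then have x01: "\<And>i. i < k \<Longrightarrow> 0 \<le> x i \<and> x i \<le> 1" and S: "Scond k x" and TA: "Tm (real n) k x \<in> A"
    by auto
  define c where "c = x (k - 1)"
  have c: "0 \<le> c" "c \<le> 1" unfolding c_def using x01[of "k-1"] k1 by auto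
  have n0: "real n > 0" using kn by simp
  define K where "K = (1 - real k / real n) ^ (n - k) * exp (real k)"
  have LHS: "(\<Prod>i<k. indicator {0..1} (x i)) * (term1 n k A x * Wf (x (k-1)) ^ (n - k)) = ennreal ((1 - c) ^ (n - k))"
  proof -
    have "(\<Prod>i<k. indicator {0..1} (x i) :: ennreal) = 1"
      using prod_indicator_all[of "{..<k}" "\<lambda>_. {0..1}" x] x01 by auto
    moreover have "term1 n k A x = 1" unfolding term1_def using S TA by simp
    moreover have "Wf (x (k-1)) = ennreal (1 - c)" unfolding Wf_def c_def[symmetric] using c by simp
    ultimately show ?thesis using c by (simp add: ennreal_power)
  qed
  have Tnn: "0 \<le> Tm (real n) k x j" if "j < k" for j
  proof (cases j)
    case 0 then show ?thesis using that x01[of 0] unfolding Tm_def by simp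
  next
    case (Suc j')
    then have "x j' \<le> x j" using S that unfolding Scond_def by auto
    then show ?thesis using that Suc unfolding Tm_def by simp
  qed
  have "(\<Prod>j<k. ennreal (exponential_density 1 (Tm (real n) k x j))) = (\<Prod>j<k. ennreal (exp (- Tm (real n) k x j)))"
    using Tnn by (intro prod.cong refl) (auto simp: exponential_density_def not_less)
  also have "\<dots> = ennreal (\<Prod>j<k. exp (- Tm (real n) k x j))"
    by (rule prod_ennreal) simp
  also have "(\<Prod>j<k. exp (- Tm (real n) k x j)) = exp (- (\<Sum>j<k. Tm (real n) k x j))"
    using exp_sum[of "{..<k}" "\<lambda>j. - Tm (real n) k x j"] by (simp add: sum_negf)
  also have "(\<Sum>j<k. Tm (real n) k x j) = real n * c"
    unfolding c_def by (rule sum_Tm[OF k1])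
  finally have pe: "(\<Prod>j<k. ennreal (exponential_density 1 (Tm (real n) k x j))) = ennreal (exp (- (real n * c)))" .
  have K0: "0 \<le> K" unfolding K_def using kn n0 by (simp add: field_simps)
  have RHS: "Gf n k A (Tm (real n) k x) = ennreal (K * exp (- (real n * c)))"
    unfolding Gf_def K_def[symmetric] pe using TA ennreal_mult[OF K0 exp_ge_zero, of "- (real n * c)"] by simp
  have "(1 - real n * c / real n) ^ (n - k) \<le> K * exp (- (real n * c))"
    unfolding K_def using exp_tangent_bound[OF kn, of "real n * c"] c n0 by (simp add: mult_le_cancel_left1 mult.assoc)
  then have "(1 - c) ^ (n - k) \<le> K * exp (- (real n * c))" using n0 by simp
  then show ?thesis unfolding LHS RHS by (rule ennreal_leI)
qed

lemma I0_eq: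
  assumes k1: "1 \<le> k" and kn: "k \<le> n" and A: "A \<in> sets (PiM {..<k} (\<lambda>_. borel))"
  shows "(\<integral>\<^sup>+ v. term0 n k A v \<partial>PiM {..<n} (\<lambda>_. UU))
       = (\<integral>\<^sup>+ x. term1 n k A x * Wf (x (k-1)) ^ (n - k) \<partial>PiM {..<k} (\<lambda>_. UU))"
proof -
  interpret U: product_sigma_finite "\<lambda>_::nat. UU"
    unfolding product_sigma_finite_def using Un_prob prob_space_imp_sigma_finite by blast
  have e: "{..<n} = {..<k} \<union> {k..<n}" using kn by auto
  have m: "term0 n k A \<in> borel_measurable (PiM ({..<k} \<union> {k..<n}) (\<lambda>_. UU))"
    using term0_meas[OF kn A] e by simp
  have "(\<integral>\<^sup>+ v. term0 n k A v \<partial>PiM {..<n} (\<lambda>_. UU))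
      = (\<integral>\<^sup>+ x. (\<integral>\<^sup>+ y. term0 n k A (merge {..<k} {k..<n} (x, y)) \<partial>PiM {k..<n} (\<lambda>_. UU)) \<partial>PiM {..<k} (\<lambda>_. UU))"
    unfolding e by (rule U.product_nn_integral_fold[OF _ _ _ m]) auto
  also have "\<dots> = (\<integral>\<^sup>+ x. term1 n k A x * Wf (x (k-1)) ^ (n - k) \<partial>PiM {..<k} (\<lambda>_. UU))"
    by (intro nn_integral_cong inner_int[OF k1])
  finally show ?thesis .
qed

lemma expd_meas[measurable]: "(\<lambda>x. ennreal (exponential_density 1 x)) \<in> borel_measurable borel"
  unfolding exponential_density_def by measurable

lemma P_exp_density:
  "P_exp k = density (PiM {..<k} (\<lambda>_. lborel)) (\<lambda>y. \<Prod>j\<in>{..<k}. ennreal (exponential_density 1 (y j)))"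
  unfolding P_exp_def
  by (rule PiM_density_lborel[OF expd_meas finite_lessThan]) (rule prob_space_exponential_density, simp)

lemma UU_PiM_density:
  "PiM {..<k::nat} (\<lambda>_. UU) = density (PiM {..<k} (\<lambda>_. lborel)) (\<lambda>x. \<Prod>i\<in>{..<k}. indicator {0..1} (x i))"
  unfolding Un_density
  by (rule PiM_density_lborel) (auto simp: Un_density[symmetric] Un_prob)

lemma outer_bound:
  assumes k1: "1 \<le> k" and kn: "k < n" and A: "A \<in> sets (PiM {..<k} (\<lambda>_. borel))"
  shows "(\<integral>\<^sup>+ x. term1 n k A x * Wf (x (k-1)) ^ (n - k) \<partial>PiM {..<k} (\<lambda>_. UU))
     \<le> ennreal ((1 / real n) ^ k) * (ennreal ((1 - real k / real n) ^ (n - k) * exp (real k)) * emeasure (P_exp k) A)"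
proof -
  have n0: "real n > 0" using kn by simp
  have sl: "sets (PiM {..<k} (\<lambda>_. lborel)) = sets (PiM {..<k} (\<lambda>_. borel))"
    by (intro sets_PiM_cong) simp_all
  have Al: "A \<in> sets (PiM {..<k} (\<lambda>_. lborel))" using A sl by simp
  have t1: "term1 n k A \<in> borel_measurable (PiM {..<k} (\<lambda>_. lborel))"
    using term1_meas[OF A] by (simp cong: measurable_cong_sets add: sl)
  have comp: "(\<lambda>x::nat\<Rightarrow>real. x (k-1)) \<in> borel_measurable (PiM {..<k} (\<lambda>_. lborel))"
    using k1 measurable_component_singleton[of "k-1" "{..<k}" "\<lambda>_. lborel"] by simp
  have hm: "(\<lambda>x. term1 n k A x * Wf (x (k-1)) ^ (n - k)) \<in> borel_measurable (PiM {..<k} (\<lambda>_. lborel))"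
  proof -
    have kk[measurable]: "k - 1 \<in> {..<k}" using k1 by simp
    note t1[measurable]
    show ?thesis by measurable
  qed
  have im: "(\<lambda>x::nat\<Rightarrow>real. \<Prod>i\<in>{..<k}. indicator {0..1} (x i) :: ennreal) \<in> borel_measurable (PiM {..<k} (\<lambda>_. lborel))"
  proof (intro borel_measurable_prod_ennreal)
    fix i assume i: "i \<in> {..<k}"
    have "(indicator {0..1::real} :: real \<Rightarrow> ennreal) \<in> borel_measurable lborel" by simp
    from measurable_comp[OF measurable_component_singleton[OF i, of "\<lambda>_. lborel"] this]
    show "(\<lambda>x::nat\<Rightarrow>real. indicator {0..1} (x i) :: ennreal) \<in> borel_measurable (PiM {..<k} (\<lambda>_. lborel))"
      by (simp add: comp_def)
  qed
  have pm[measurable]: "(\<lambda>x::nat\<Rightarrow>real. \<Prod>j<k. ennreal (exponential_density 1 (x j))) \<in> borel_measurable (PiM {..<k} (\<lambda>_. lborel))"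
  proof (intro borel_measurable_prod_ennreal)
    fix i assume i: "i \<in> {..<k}"
    have e: "(\<lambda>x. ennreal (exponential_density 1 x)) \<in> borel_measurable lborel" using expd_meas by simp
    from measurable_comp[OF measurable_component_singleton[OF i, of "\<lambda>_. lborel"] e]
    show "(\<lambda>x::nat\<Rightarrow>real. ennreal (exponential_density 1 (x i))) \<in> borel_measurable (PiM {..<k} (\<lambda>_. lborel))"
      by (simp add: comp_def)
  qed
  have am[measurable]: "(indicator A :: _ \<Rightarrow> ennreal) \<in> borel_measurable (PiM {..<k} (\<lambda>_. lborel))"
    using Al by simp
  have am2: "(\<lambda>y. indicator A y * (\<Prod>j<k. ennreal (exponential_density 1 (y j)))) \<in> borel_measurable (PiM {..<k} (\<lambda>_. lborel))"
    by measurable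
  have Gm: "Gf n k A \<in> borel_measurable (PiM {..<k} (\<lambda>_. lborel))"
    unfolding Gf_def using am2 by measurable
  have "(\<integral>\<^sup>+ x. term1 n k A x * Wf (x (k-1)) ^ (n - k) \<partial>PiM {..<k} (\<lambda>_. UU))
      = (\<integral>\<^sup>+ x. (\<Prod>i\<in>{..<k}. indicator {0..1} (x i)) * (term1 n k A x * Wf (x (k-1)) ^ (n - k)) \<partial>PiM {..<k} (\<lambda>_. lborel))"
    unfolding UU_PiM_density using im hm by (rule nn_integral_density)
  also have "\<dots> \<le> (\<integral>\<^sup>+ x. Gf n k A (Tm (real n) k x) \<partial>PiM {..<k} (\<lambda>_. lborel))"
    by (intro nn_integral_mono pointwise2[OF k1 kn])
  also have "\<dots> = ennreal ((1 / real n) ^ k) * (\<integral>\<^sup>+ y. Gf n k A y \<partial>PiM {..<k} (\<lambda>_. lborel))"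
    by (rule CV[OF n0 Gm])
  also have "(\<integral>\<^sup>+ y. Gf n k A y \<partial>PiM {..<k} (\<lambda>_. lborel))
      = ennreal ((1 - real k / real n) ^ (n - k) * exp (real k)) * (\<integral>\<^sup>+ y. indicator A y * (\<Prod>j<k. ennreal (exponential_density 1 (y j))) \<partial>PiM {..<k} (\<lambda>_. lborel))"
    unfolding Gf_def using am2 by (intro nn_integral_cmult)
  also have "(\<integral>\<^sup>+ y. indicator A y * (\<Prod>j<k. ennreal (exponential_density 1 (y j))) \<partial>PiM {..<k} (\<lambda>_. lborel)) = emeasure (P_exp k) A"
    unfolding P_exp_density using Al
    by (subst emeasure_density) (auto simp: mult.commute intro!: nn_integral_cong)
  finally show ?thesis .
qed

lemma card_Tup: "k \<le> n \<Longrightarrow> card (Tup n k) = \<Prod>{n - k + 1..n}"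
  unfolding Tup_def using card_lists_distinct_length_eq[of "{..<n}" k] by simp

lemma main_bound:
  assumes k1: "1 \<le> k" and kn: "k < n" and A: "A \<in> sets (PiM {..<k} (\<lambda>_. borel))"
  shows "emeasure (Q_dist n k) A \<le> ennreal (Cst n k) * emeasure (P_exp k) A"
proof -
  define K where "K = (1 - real k / real n) ^ (n - k) * exp (real k)"
  define I0 where "I0 = (\<integral>\<^sup>+ v. term0 n k A v \<partial>PiM {..<n} (\<lambda>_. UU))"
  have kn': "k \<le> n" using kn by simp
  have n0: "real n > 0" using kn by simp
  have K0: "0 \<le> K" unfolding K_def using kn n0 by (simp add: field_simps)
  have Ad: "A \<in> sets (Q_dist n k)" using A by (simp add: Q_dist_def)
  have "emeasure (Q_dist n k) A = (\<integral>\<^sup>+ y. indicator A y \<partial>Q_dist n k)"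
    using Ad by simp
  also have "\<dots> = (\<integral>\<^sup>+ u. indicator A (Y_spacings n k u) \<partial>PiM {..<n} (\<lambda>_. UU))"
    unfolding Q_dist_def using A by (intro nn_integral_distr Y_meas) simp
  also have "\<dots> \<le> (\<integral>\<^sup>+ u. (\<Sum>t\<in>Tup n k. term0 n k A (reidx n t u)) \<partial>PiM {..<n} (\<lambda>_. UU))"
    by (intro nn_integral_mono pointwise[OF kn' k1])
  also have "\<dots> = (\<Sum>t\<in>Tup n k. \<integral>\<^sup>+ u. term0 n k A (reidx n t u) \<partial>PiM {..<n} (\<lambda>_. UU))"
  proof (rule nn_integral_sum)
    fix t assume t: "t \<in> Tup n k"
    from measurable_comp[OF reidx_meas[OF t] term0_meas[OF kn' A]]
    show "(\<lambda>u. term0 n k A (reidx n t u)) \<in> borel_measurable (PiM {..<n} (\<lambda>_. UU))"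
      by (simp add: comp_def)
  qed
  also have "\<dots> = (\<Sum>t\<in>Tup n k. I0)"
    unfolding I0_def by (intro sum.cong refl symmetry term0_meas[OF kn' A])
  also have "\<dots> = of_nat (card (Tup n k)) * I0" by simp
  also have "I0 \<le> ennreal ((1 / real n) ^ k) * (ennreal K * emeasure (P_exp k) A)"
    unfolding I0_def I0_eq[OF k1 kn' A] K_def by (rule outer_bound[OF k1 kn A])
  then have "of_nat (card (Tup n k)) * I0 \<le> of_nat (card (Tup n k)) * (ennreal ((1 / real n) ^ k) * (ennreal K * emeasure (P_exp k) A))"
    by (rule mult_left_mono) simp
  also have "of_nat (card (Tup n k)) * (ennreal ((1 / real n) ^ k) * (ennreal K * emeasure (P_exp k) A)) = ennreal (Cst n k) * emeasure (P_exp k) A"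
  proof -
    have c: "of_nat (card (Tup n k)) = ennreal (\<Prod>i\<in>{n - k + 1..n}. real i)"
      unfolding card_Tup[OF kn'] by (simp add: ennreal_of_nat_eq_real_of_nat of_nat_prod)
    have Ce: "Cst n k = (\<Prod>i\<in>{n - k + 1..n}. real i) * ((1 / real n) ^ k) * K"
      unfolding Cst_def K_def by (simp add: field_simps)
    have p0: "0 \<le> (\<Prod>i\<in>{n - k + 1..n}. real i)" by (simp add: prod_nonneg)
    show ?thesis unfolding c Ce using p0 K0 n0
      by (simp add: ennreal_mult mult.assoc)
  qed
  finally show ?thesis .
qed

lemma Q_prob: "prob_space (Q_dist n k)"
proof -
  interpret P: prob_space "PiM {..<n} (\<lambda>_. UU)" by (rule prob_space_PiM) (rule Un_prob)
  show ?thesis unfolding Q_dist_def by (rule P.prob_space_distr[OF Y_meas])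
qed

lemma P_prob: "prob_space (P_exp k)"
  unfolding P_exp_def by (rule prob_space_PiM) (rule prob_space_exponential_density, simp)

lemma sets_Q: "sets (Q_dist n k) = sets (PiM {..<k} (\<lambda>_. borel))"
  by (simp add: Q_dist_def)

lemma sets_P: "sets (P_exp k) = sets (PiM {..<k} (\<lambda>_. borel))"
  unfolding P_exp_def by (intro sets_PiM_cong) simp_all

lemma real_bound:
  assumes k1: "1 \<le> k" and kn: "k < n" and c: "Cst n k \<le> c" and A: "A \<in> sets (P_exp k)"
  shows "measure (Q_dist n k) A \<le> c * measure (P_exp k) A"
proof -
  interpret Q: prob_space "Q_dist n k" by (rule Q_prob)
  interpret P: prob_space "P_exp k" by (rule P_prob)
  have A': "A \<in> sets (PiM {..<k} (\<lambda>_. borel))" using A sets_P by simp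
  have C0: "0 \<le> Cst n k" using Cst_nonneg[OF kn] .
  have "ennreal (measure (Q_dist n k) A) \<le> ennreal (Cst n k) * ennreal (measure (P_exp k) A)"
    using main_bound[OF k1 kn A'] by (simp add: Q.emeasure_eq_measure P.emeasure_eq_measure)
  also have "\<dots> = ennreal (Cst n k * measure (P_exp k) A)" using C0 by (simp add: ennreal_mult)
  finally have "measure (Q_dist n k) A \<le> Cst n k * measure (P_exp k) A"
    using C0 by (subst (asm) ennreal_le_iff) auto
  also have "\<dots> \<le> c * measure (P_exp k) A" using c by (intro mult_right_mono) auto
  finally show ?thesis .
qed

lemma ratio_bound:
  assumes k1: "1 \<le> k" and kn: "k < n" and c: "Cst n k \<le> c"
  shows "ratio_sup (Q_dist n k) (P_exp k) \<le> ennreal c"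
  unfolding ratio_sup_def
proof (rule SUP_least)
  interpret Q: prob_space "Q_dist n k" by (rule Q_prob)
  interpret P: prob_space "P_exp k" by (rule P_prob)
  fix A assume A: "A \<in> sets (P_exp k)"
  have c0: "0 \<le> c" using Cst_nonneg[OF kn] c by linarith
  have AQ: "A \<in> sets (Q_dist n k)" using A sets_P sets_Q by simp
  have r: "measure (Q_dist n k) A \<le> c * measure (P_exp k) A" by (rule real_bound[OF k1 kn c A])
  show "(if emeasure (P_exp k) A = 0 then (if emeasure (Q_dist n k) A = 0 then 0 else \<infinity>)
      else emeasure (Q_dist n k) A / emeasure (P_exp k) A) \<le> ennreal c"
  proof (cases "emeasure (P_exp k) A = 0")
    case True
    then have "measure (P_exp k) A = 0" by (simp add: P.emeasure_eq_measure)
    then have "measure (Q_dist n k) A = 0" using r measure_nonneg[of "Q_dist n k" A] by simp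
    then have "emeasure (Q_dist n k) A = 0" by (simp add: Q.emeasure_eq_measure)
    then show ?thesis using True by simp
  next
    case False
    then have p: "measure (P_exp k) A > 0" using measure_nonneg[of "P_exp k" A]
      by (simp add: P.emeasure_eq_measure less_le)
    have "emeasure (Q_dist n k) A / emeasure (P_exp k) A = ennreal (measure (Q_dist n k) A / measure (P_exp k) A)"
      by (simp add: Q.emeasure_eq_measure P.emeasure_eq_measure divide_ennreal p)
    also have "\<dots> \<le> ennreal c"
      using r p by (intro ennreal_leI) (simp add: divide_le_eq mult.commute)
    finally show ?thesis using False by simp
  qed
qed

lemma tv_arith:
  fixes a b c :: real
  assumes "0 \<le> a" "a \<le> 1" "0 \<le> b" "a \<le> c * b" "1 \<le> c"
  shows "a - b \<le> 1 - 1 / c"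
proof -
  have c0: "c > 0" using assms by simp
  have "a / c \<le> b" using assms c0 by (simp add: divide_le_eq mult.commute)
  moreover have "a * (1 - 1 / c) \<le> 1 - 1 / c"
    using assms c0 by (intro mult_left_le_one_le) (auto simp: field_simps)
  moreover have "a * (1 - 1 / c) = a - a / c" by (simp add: algebra_simps)
  ultimately show ?thesis by linarith
qed

lemma dTV_bound:
  assumes k1: "1 \<le> k" and kn: "k < n" and c: "Cst n k \<le> c"
  shows "dTV (Q_dist n k) (P_exp k) \<le> 1 - 1 / c"
  unfolding dTV_def
proof (rule cSUP_least)
  interpret Q: prob_space "Q_dist n k" by (rule Q_prob)
  interpret P: prob_space "P_exp k" by (rule P_prob)
  have tp: "space (P_exp k) \<in> sets (P_exp k)" by simp
  show "sets (P_exp k) \<noteq> {}" using tp by blast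
  have ss: "sets (Q_dist n k) = sets (P_exp k)" using sets_P sets_Q by simp
  have sp: "space (Q_dist n k) = space (P_exp k)" using sets_eq_imp_space_eq[OF ss] .
  have "measure (Q_dist n k) (space (P_exp k)) \<le> c * measure (P_exp k) (space (P_exp k))"
    by (rule real_bound[OF k1 kn c tp])
  then have c1: "1 \<le> c" using Q.prob_space P.prob_space sp by simp
  fix A assume A: "A \<in> sets (P_exp k)"
  have AQ: "A \<in> sets (Q_dist n k)" using A ss by simp
  have AC: "space (P_exp k) - A \<in> sets (P_exp k)" using A by auto
  have r1: "measure (Q_dist n k) A \<le> c * measure (P_exp k) A" by (rule real_bound[OF k1 kn c A])
  have r2: "measure (Q_dist n k) (space (P_exp k) - A) \<le> c * measure (P_exp k) (space (P_exp k) - A)"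
    by (rule real_bound[OF k1 kn c AC])
  have q2: "measure (Q_dist n k) (space (P_exp k) - A) = 1 - measure (Q_dist n k) A"
    using Q.prob_compl[OF AQ] sp by simp
  have p2: "measure (P_exp k) (space (P_exp k) - A) = 1 - measure (P_exp k) A"
    using P.prob_compl[OF A] by simp
  have d1: "measure (Q_dist n k) A - measure (P_exp k) A \<le> 1 - 1 / c"
    using r1 c1 by (intro tv_arith) (auto simp: measure_nonneg measure_nonneg)
  have d2: "(1 - measure (Q_dist n k) A) - (1 - measure (P_exp k) A) \<le> 1 - 1 / c"
    using r2 c1 unfolding q2 p2 by (intro tv_arith) (auto simp: measure_nonneg measure_nonneg)
  show "\<bar>measure (Q_dist n k) A - measure (P_exp k) A\<bar> \<le> 1 - 1 / c"
    using d1 d2 by linarith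
qed

theorem corollary7:
  fixes n k :: nat
  assumes "1 \<le> k" and "k < n"
  shows "(k = 1 \<longrightarrow> ratio_sup (Q_dist n k) (P_exp k)
             \<le> ennreal (exp (1 / (2 * real n) + 1 / (4 * real n ^ 2))))
       \<and> ratio_sup (Q_dist n k) (P_exp k) \<le> ennreal ((1 - real k / real n) powr (-1/2))
       \<and> (k = 1 \<longrightarrow> dTV (Q_dist n k) (P_exp k) \<le> 1 / (2 * real n) + 1 / (4 * real n ^ 2))
       \<and> dTV (Q_dist n k) (P_exp k) \<le> 1 - sqrt (1 - real k / real n)
       \<and> 1 - sqrt (1 - real k / real n) < real k / (2 * real n - real k)"
proof (intro conjI impI)
  note k1 = assms(1) and kn = assms(2)
  define t where "t = 1 - real k / real n"
  have t0: "t > 0" unfolding t_def using kn by (simp add: field_simps)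
  have C1: "Cst n k \<le> t powr (-1/2)" unfolding t_def by (rule Cst_general[OF kn])
  show "ratio_sup (Q_dist n k) (P_exp k) \<le> ennreal ((1 - real k / real n) powr (-1/2))"
    using ratio_bound[OF k1 kn C1] unfolding t_def .
  have "dTV (Q_dist n k) (P_exp k) \<le> 1 - 1 / t powr (-1/2)"
    by (rule dTV_bound[OF k1 kn C1])
  also have "1 / t powr (-1/2) = sqrt t"
    using t0 by (simp add: powr_minus_divide powr_half_sqrt[symmetric])
  finally show "dTV (Q_dist n k) (P_exp k) \<le> 1 - sqrt (1 - real k / real n)" unfolding t_def .
  show "1 - sqrt (1 - real k / real n) < real k / (2 * real n - real k)"
    by (rule final_ineq[OF k1 kn])
  define x where "x = 1 / (2 * real n) + 1 / (4 * real n ^ 2)"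
  assume k: "k = 1"
  have n2: "n \<ge> 2" using kn k by simp
  have C2: "Cst n k \<le> exp x" unfolding x_def k by (rule Cst_one[OF n2])
  show "ratio_sup (Q_dist n k) (P_exp k) \<le> ennreal (exp (1 / (2 * real n) + 1 / (4 * real n ^ 2)))"
    using ratio_bound[OF k1 kn C2] unfolding x_def .
  have "dTV (Q_dist n k) (P_exp k) \<le> 1 - 1 / exp x"
    by (rule dTV_bound[OF k1 kn C2])
  also have "1 - 1 / exp x = 1 - exp (- x)" by (simp add: exp_minus field_simps)
  also have "\<dots> \<le> x" using exp_ge_add_one_self[of "- x"] by simp
  finally show "dTV (Q_dist n k) (P_exp k) \<le> 1 / (2 * real n) + 1 / (4 * real n ^ 2)" unfolding x_def .
qed


end
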